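(* In the single-client model described in the context with fixed memory capacity $k$, as the number $N$ of observed test samples tends to infinity, every memory element converges in probability to the corresponding point $m^*_y$, where $m_0^*=-\mu-w_{\mathrm{pre}}$ and $m_1^*=\mu+w_{\mathrm{pre}}$; that is, for each $y\in\{0,1\}$ and every $\rho>0$, the probability that $M_y$ contains $k$ elements and each element $m_{y,\kappa}$, $\kappa=1,\dots,k$, satisfies $\|m_{y,\kappa}-m^*_y\|_2\le\rho$ tends to $1$ as $N\to\infty$.
   Context: Fix $d\ge 1$, $\mu\in\mathbb{R}^d$, $w_{\mathrm{pre}}\in\mathbb{R}^d$ with $\|w_{\mathrm{pre}}\|_2=1$, $b_{\mathrm{pre}}\in\mathbb{R}$, $t>0$. Data: label $y$ uniform on $\{0,1\}$; given $y$, embedding $f$ uniform on the closed unit ball centered at $(2y-1)\mu$. Initial classifier $z(f)=f^\top w_{\mathrm{pre}}+b_{\mathrm{pre}}$, $\hat p_1=1/(1+e^{-tz(f)})$, $\hat p_0=1-\hat p_1$, $\hat y(f)=\mathbf 1\{z(f)>0\}$, entropy $H(f)=-\hat p_1\log\hat p_1-\hat p_0\log\hat p_0$. Assumption: the error rate $\epsilon_{\mathrm{pre}}=\Pr(\hat y(f)\ne y)<1/2$, equivalently $\mu^\top w_{\mathrm{pre}}>0$ and $-\mu^\top w_{\mathrm{pre}}-1<b_{\mathrm{pre}}<\mu^\top w_{\mathrm{pre}}+1$. The client observes i.i.d. embeddings $f_1,\dots,f_N$; for $y\in\{0,1\}$ the memory $M_y=\{m_{y,1},\dots\}$ consists of the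 (at most) $k$ observed embeddings with $\hat y=y$ having the smallest entropy. *)

theory Defs
  imports "HOL-Probability.Probability"
begin

text \<open>Labels y in {0,1} are encoded as bool (True = 1, False = 0).\<close>

definition center :: "'a::euclidean_space \<Rightarrow> bool \<Rightarrow> 'a" where
  "center \<mu> y = (if y then \<mu> else - \<mu>)"

definition data_dist :: "'a::euclidean_space \<Rightarrow> (bool \<times> 'a) measure" where
  "data_dist \<mu> = measure_pmf (bernoulli_pmf (1/2)) \<bind>
     (\<lambda>y. distr (uniform_measure lborel (cball (center \<mu> y) 1))
                 (count_space UNIV \<Otimes>\<^sub>M borel) (\<lambda>f. (y, f)))"

definition logit :: "'a::euclidean_space \<Rightarrow> real \<Rightarrow> 'a \<Rightarrow> real" where
  "logit w b f = f \<bullet> w + b"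

definition phat1 :: "real \<Rightarrow> 'a::euclidean_space \<Rightarrow> real \<Rightarrow> 'a \<Rightarrow> real" where
  "phat1 t w b f = 1 / (1 + exp (- t * logit w b f))"

definition yhat :: "'a::euclidean_space \<Rightarrow> real \<Rightarrow> 'a \<Rightarrow> bool" where
  "yhat w b f = (logit w b f > 0)"

definition entropy :: "real \<Rightarrow> 'a::euclidean_space \<Rightarrow> real \<Rightarrow> 'a \<Rightarrow> real" where
  "entropy t w b f = (let p1 = phat1 t w b f; p0 = 1 - p1 in - p1 * ln p1 - p0 * ln p0)"

text \<open>Memory M_y built from observations f_0,...,f_{N-1}: the (at most) k indices i with
  predicted label y having smallest entropy; ties (a null event) are broken by index.
  Represented as a set of sample indices.\<close>
definition memory :: "real \<Rightarrow> 'a::euclidean_space \<Rightarrow> real \<Rightarrow> nat \<Rightarrow> nat \<Rightarrow> bool \<Rightarrow> (nat \<Rightarrow> 'a) \<Rightarrow> nat set" where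
  "memory t w b k N y fs =
     {i. i < N \<and> yhat w b (fs i) = y \<and>
         card {j. j < N \<and> yhat w b (fs j) = y \<and>
                  (entropy t w b (fs j) < entropy t w b (fs i) \<or>
                   (entropy t w b (fs j) = entropy t w b (fs i) \<and> j < i))} < k}"

definition mstar :: "'a::euclidean_space \<Rightarrow> 'a \<Rightarrow> bool \<Rightarrow> 'a" where
  "mstar \<mu> w y = (if y then \<mu> + w else - \<mu> - w)"

end

theory Submission
  imports Defs
begin

definition hh :: "real \<Rightarrow> real" where "hh p = - p * ln p - (1 - p) * ln (1 - p)"

lemma hh_deriv: "0 < p \<Longrightarrow> p < 1 \<Longrightarrow> (hh has_real_derivative (ln (1-p) - ln p)) (at p)"
  unfolding hh_def
  by (rule derivative_eq_intros refl | force)+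

lemma hh_strict_dec:
  assumes "1/2 \<le> p" "p < q" "q < 1"
  shows "hh q < hh p"
proof (rule DERIV_neg_imp_decreasing_open[of p q hh])
  show "p < q" by fact
  fix x assume x: "p < x" "x < q"
  have "ln (1-x) < ln x" using x assms by (subst ln_less_cancel_iff) auto
  then show "\<exists>y. (hh has_real_derivative y) (at x) \<and> y < 0"
    using hh_deriv[of x] x assms by (intro exI[of _ "ln (1-x) - ln x"]) auto
next
  show "continuous_on {p..q} hh"
    using assms unfolding hh_def by (intro continuous_intros) auto
qed

lemma hh_sym: "hh (1 - p) = hh p" unfolding hh_def by (simp add: algebra_simps)

lemma entropy_hh: "entropy t w b f = hh (1 / (1 + exp (- t * logit w b f)))"
  unfolding entropy_def phat1_def hh_def Let_def by simp

lemma entropy_abs: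
  shows "entropy t w b f = hh (1 / (1 + exp (- t * \<bar>logit w b f\<bar>)))"
proof (cases "logit w b f \<ge> 0")
  case True then show ?thesis by (simp add: entropy_hh)
next
  case False
  let ?z = "logit w b f"
  have "1 / (1 + exp (- t * ?z)) = 1 - 1 / (1 + exp (- t * \<bar>?z\<bar>))"
    using False by (simp add: field_simps exp_minus add_pos_pos add_divide_distrib[symmetric] add_nonneg_eq_0_iff)
  then show ?thesis by (simp add: entropy_hh hh_sym)
qed

lemma entropy_less:
  assumes "t > 0" "\<bar>logit w b g\<bar> < \<bar>logit w b f\<bar>"
  shows "entropy t w b f < entropy t w b g"
proof -
  let ?p = "\<lambda>a::real. 1 / (1 + exp (- t * a))"
  have mono: "?p a < ?p a'" if "a < a'" for a a'
  proof -
    have "exp (- t * a') < exp (- t * a)" using that assms by simp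
    then show ?thesis by (simp add: divide_simps add_pos_pos)
  qed
  have half: "1/2 \<le> ?p \<bar>logit w b g\<bar>"
  proof -
    have e: "exp (- t * \<bar>logit w b g\<bar>) \<le> 1" using assms by simp
    have "0 < 1 + exp (- t * \<bar>logit w b g\<bar>)" by (simp add: add_pos_pos)
    then show ?thesis using e by (simp add: le_divide_eq)
  qed
  have lt1: "?p a < 1" for a by (simp add: divide_simps add_pos_pos)
  show ?thesis unfolding entropy_abs[of t w b f] entropy_abs[of t w b g]
    by (rule hh_strict_dec[OF half mono[OF assms(2)] lt1])
qed

lemma rank_card:
  fixes P :: "'b set" and R :: "'b \<Rightarrow> 'b \<Rightarrow> bool"
  assumes fin: "finite P" and irr: "\<And>i. \<not> R i i"
    and tr: "\<And>i j l. R i j \<Longrightarrow> R j l \<Longrightarrow> R i l"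
    and tot: "\<And>i j. i \<in> P \<Longrightarrow> j \<in> P \<Longrightarrow> i \<noteq> j \<Longrightarrow> R i j \<or> R j i"
    and k: "k \<le> card P"
  shows "card {i\<in>P. card {j\<in>P. R j i} < k} = k"
proof -
  define rk where "rk i = card {j\<in>P. R j i}" for i
  have lt: "rk i < rk j" if "R i j" "j \<in> P" "i \<in> P" for i j
  proof -
    have "{x\<in>P. R x i} \<subset> {x\<in>P. R x j}"
      using that irr tr by blast
    then show ?thesis unfolding rk_def by (intro psubset_card_mono) (use fin in auto)
  qed
  have inj: "inj_on rk P"
    by (intro inj_onI) (metis lt tot less_irrefl)
  have rng: "rk ` P \<subseteq> {..<card P}"
  proof
    fix x assume "x \<in> rk ` P"
    then obtain i where i: "i \<in> P" "x = rk i" by auto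
    have "{j\<in>P. R j i} \<subset> P" using i irr by blast
    then show "x \<in> {..<card P}" using i fin unfolding rk_def by (auto intro: psubset_card_mono)
  qed
  have img: "rk ` P = {..<card P}"
    using rng card_image[OF inj] by (intro card_subset_eq) auto
  have "rk ` {i\<in>P. rk i < k} = {..<k}"
    using img k by (auto simp: image_iff)
  then have "card (rk ` {i\<in>P. rk i < k}) = k" by simp
  moreover have "card (rk ` {i\<in>P. rk i < k}) = card {i\<in>P. rk i < k}"
    by (rule card_image) (rule inj_on_subset[OF inj], auto)
  ultimately show ?thesis unfolding rk_def by simp
qed

lemma geo1:
  fixes c v f :: "'a::euclidean_space"
  assumes "norm v = 1" "dist c f \<le> 1" "f \<bullet> v > c \<bullet> v + 1 - \<delta>" "2 * \<delta> \<le> \<rho>\<^sup>2" "\<rho> > 0"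
  shows "norm (f - (c + v)) \<le> \<rho>"
proof -
  define u where "u = f - c"
  have u1: "norm u \<le> 1" using assms(2) by (simp add: u_def dist_norm norm_minus_commute)
  have uv: "u \<bullet> v > 1 - \<delta>" using assms(3) by (simp add: u_def inner_diff_left)
  have vv: "v \<bullet> v = 1" using assms(1) by (metis power2_norm_eq_inner one_power2)  
  have "(norm (u - v))\<^sup>2 = (u - v) \<bullet> (u - v)" by (rule power2_norm_eq_inner)
  also have "\<dots> = u \<bullet> u - 2 * (u \<bullet> v) + v \<bullet> v"
    by (simp add: inner_diff_left inner_diff_right inner_commute[of v u])
  also have "\<dots> = (norm u)\<^sup>2 - 2 * (u \<bullet> v) + 1"
    using vv by (simp add: power2_norm_eq_inner)
  also have "\<dots> \<le> \<rho>\<^sup>2"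
  proof -
    have "(norm u)\<^sup>2 \<le> 1" using u1 by (simp add: power_le_one)
    then show ?thesis using uv assms(4) by linarith
  qed
  finally have "(norm (u - v))\<^sup>2 \<le> \<rho>\<^sup>2" .
  then have nr: "norm (u - v) \<le> \<rho>" by (rule power2_le_imp_le[OF _ less_imp_le[OF assms(5)]])
  have "f - (c + v) = u - v" by (simp add: u_def)
  then show ?thesis using nr by (simp only:)
qed

lemma geo2:
  fixes c v f :: "'a::euclidean_space"
  assumes "norm v = 1" "dist (- c) f \<le> 1" "\<delta> \<le> 2 * (c \<bullet> v)"
  shows "f \<bullet> v \<le> c \<bullet> v + 1 - \<delta>"
proof -
  have cs: "(f + c) \<bullet> v \<le> norm (f + c) * norm v" by (rule norm_cauchy_schwarz)
  have "norm (- c - f) = norm (f + c)" 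
  proof -
    have "- c - f = - (f + c)" by simp
    then show ?thesis by (simp only: norm_minus_cancel)
  qed
  then have "norm (f + c) \<le> 1" using assms(2) by (simp add: dist_norm)
  then have "(f + c) \<bullet> v \<le> 1" using cs assms(1) by simp
  then show ?thesis using assms(3) by (simp add: inner_add_left)
qed

lemma geo3:
  fixes c v :: "'a::euclidean_space"
  assumes "norm v = 1" "0 < s" "s \<le> 1" "3 * s \<le> 2 * \<delta>"
  shows "ball (c + (1 - s) *\<^sub>R v) (s/2) \<subseteq> cball c 1 \<inter> {f. f \<bullet> v > c \<bullet> v + 1 - \<delta>}"
proof
  fix x assume x: "x \<in> ball (c + (1 - s) *\<^sub>R v) (s/2)"
  define q where "q = c + (1 - s) *\<^sub>R v"
  have d: "norm (x - q) < s/2" using x by (simp add: q_def dist_norm norm_minus_commute)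
  have vv: "v \<bullet> v = 1" using assms(1) by (metis power2_norm_eq_inner one_power2)
  have "norm (x - c) \<le> norm (x - q) + norm (q - c)"
  proof -
    have "x - c = (x - q) + (q - c)" by simp
    then show ?thesis by (metis norm_triangle_ineq)
  qed
  also have "norm (q - c) = 1 - s" using assms by (simp add: q_def)
  finally have "norm (x - c) \<le> 1" using d assms(2) by linarith
  then have "x \<in> cball c 1" by (simp add: dist_norm norm_minus_commute)
  moreover
  have "(q - x) \<bullet> v \<le> norm (q - x) * norm v" by (rule norm_cauchy_schwarz)
  then have "(q - x) \<bullet> v < s/2" using d assms(1) by (simp add: norm_minus_commute)
  moreover have "q \<bullet> v = c \<bullet> v + (1 - s)" using vv by (simp add: q_def inner_add_left)
  ultimately show "x \<in> cball c 1 \<inter> {f. f \<bullet> v > c \<bullet> v + 1 - \<delta>}"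
    using assms by (simp add: inner_diff_left)
qed

lemma memory_eq:
  "memory t w b k N y fs = {i\<in>{i. i < N \<and> yhat w b (fs i) = y}.
     card {j\<in>{i. i < N \<and> yhat w b (fs i) = y}. entropy t w b (fs j) < entropy t w b (fs i) \<or>
                   (entropy t w b (fs j) = entropy t w b (fs i) \<and> j < i)} < k}"
  unfolding memory_def by (simp add: conj_assoc)

lemma memory_good:
  fixes J :: "'a::euclidean_space set"
  assumes t: "t > 0"
    and hJ: "\<And>f g. f \<in> J \<Longrightarrow> yhat w b f = y \<and> (yhat w b g = y \<and> g \<notin> J \<longrightarrow> \<bar>logit w b g\<bar> < \<bar>logit w b f\<bar>)"
    and cJ: "k \<le> card {i. i < N \<and> fs i \<in> J}"
    and nJ: "\<And>i. i < N \<Longrightarrow> fs i \<in> J \<Longrightarrow> norm (fs i - m) \<le> \<rho>"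
  shows "card (memory t w b k N y fs) = k \<and> (\<forall>i\<in>memory t w b k N y fs. norm (fs i - m) \<le> \<rho>)"
proof
  let ?P = "{i. i < N \<and> yhat w b (fs i) = y}"
  let ?e = "\<lambda>i. entropy t w b (fs i)"
  have finP: "finite ?P" by simp
  have sub: "{i. i < N \<and> fs i \<in> J} \<subseteq> ?P" using hJ by auto
  have "k \<le> card ?P" using cJ card_mono[OF finP sub] by linarith
  then show "card (memory t w b k N y fs) = k"
    unfolding memory_eq
    by (rule rank_card[OF finP, of "\<lambda>j i. ?e j < ?e i \<or> (?e j = ?e i \<and> j < i)", rotated -1])
       (auto simp: not_less_iff_gr_or_eq)
  show "\<forall>i\<in>memory t w b k N y fs. norm (fs i - m) \<le> \<rho>"
  proof
    fix i assume i: "i \<in> memory t w b k N y fs"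
    have iN: "i < N" and iy: "yhat w b (fs i) = y" using i unfolding memory_def by auto
    have ck: "card {j. j < N \<and> yhat w b (fs j) = y \<and>
                  (?e j < ?e i \<or> (?e j = ?e i \<and> j < i))} < k" using i unfolding memory_def by auto
    show "norm (fs i - m) \<le> \<rho>"
    proof (cases "fs i \<in> J")
      case True then show ?thesis using nJ iN by auto
    next
      case False
      have "{j. j < N \<and> fs j \<in> J} \<subseteq> {j. j < N \<and> yhat w b (fs j) = y \<and>
                  (?e j < ?e i \<or> (?e j = ?e i \<and> j < i))}"
        using hJ[of _ "fs i"] iy False entropy_less[OF t] by blast
      from card_mono[OF _ this] cJ ck show ?thesis by simp
    qed
  qed
qed

abbreviation KK :: "(bool \<times> 'a::euclidean_space) measure" where
  "KK \<equiv> count_space UNIV \<Otimes>\<^sub>M borel"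

definition Kf :: "'a::euclidean_space \<Rightarrow> bool \<Rightarrow> (bool \<times> 'a) measure" where
  "Kf \<mu> y = distr (uniform_measure lborel (cball (center \<mu> y) 1)) KK (\<lambda>f. (y, f))"

lemma cball_pos: "0 < emeasure lborel (cball (c::'a::euclidean_space) 1)"
proof -
  have "0 < measure lborel (ball c 1)" by (rule content_ball_pos) simp
  then have "emeasure lborel (ball c 1) \<noteq> 0" by (auto simp: measure_def)
  moreover have "emeasure lborel (ball c 1) \<le> emeasure lborel (cball c 1)"
    by (intro emeasure_mono) auto
  ultimately show ?thesis by (simp add: zero_less_iff_neq_zero[symmetric] order_less_le_trans)
qed

lemma cball_fin: "emeasure lborel (cball (c::'a::euclidean_space) 1) \<noteq> \<infinity>"
  using emeasure_lborel_cball_finite[of c 1] by simp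

lemma prob_U: "prob_space (uniform_measure lborel (cball (c::'a::euclidean_space) 1))"
  by (rule prob_space_uniform_measure) (use cball_pos[of c] cball_fin[of c] in auto)

lemma meas_pair: "(\<lambda>f::'a::euclidean_space. (y, f)) \<in> measurable (uniform_measure lborel (cball c 1)) KK"
  by measurable

lemma Kf_prob: "prob_space (Kf \<mu> y)"
  unfolding Kf_def by (rule prob_space.prob_space_distr[OF prob_U meas_pair])

lemma sets_Kf: "sets (Kf \<mu> y) = sets KK"
  unfolding Kf_def by simp

lemma Kf_in: "Kf \<mu> y \<in> space (subprob_algebra KK)"
  using Kf_prob[of \<mu> y] sets_Kf[of \<mu> y]
  by (simp add: space_subprob_algebra prob_space_imp_subprob_space)

lemma data_dist_Kf: "data_dist \<mu> = measure_pmf (bernoulli_pmf (1/2)) \<bind> Kf \<mu>"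
  unfolding data_dist_def Kf_def ..

lemma Kf_meas: "Kf \<mu> \<in> measurable (measure_pmf (bernoulli_pmf (1/2))) (subprob_algebra KK)"
  by (simp add: Pi_iff Kf_in)

lemma sets_data: "sets (data_dist \<mu>) = sets KK"
  unfolding data_dist_Kf by (subst sets_bind[where N=KK]) (auto simp: sets_Kf)

lemma space_data: "space (data_dist \<mu>) = UNIV"
  using sets_eq_imp_space_eq[OF sets_data[of \<mu>]] by (simp add: space_pair_measure)

lemma emeasure_data: "X \<in> sets KK \<Longrightarrow>
   emeasure (data_dist \<mu>) X = (\<integral>\<^sup>+y. emeasure (Kf \<mu> y) X \<partial>measure_pmf (bernoulli_pmf (1/2)))"
  unfolding data_dist_Kf by (rule emeasure_bind[OF _ Kf_meas]) auto

lemma prob_data: "prob_space (data_dist \<mu>)"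
proof (rule prob_spaceI)
  have "emeasure (data_dist \<mu>) UNIV = (\<integral>\<^sup>+y. emeasure (Kf \<mu> y) UNIV \<partial>measure_pmf (bernoulli_pmf (1/2)))"
  proof (rule emeasure_data)
    have "UNIV \<times> UNIV \<in> sets KK" by (intro pair_measureI) auto
    then show "UNIV \<in> sets KK" by simp
  qed
  also have "\<dots> = (\<integral>\<^sup>+y. 1 \<partial>measure_pmf (bernoulli_pmf (1/2)))"
  proof (intro nn_integral_cong)
    fix y
    have "space (Kf \<mu> y) = UNIV" using sets_eq_imp_space_eq[OF sets_Kf[of \<mu> y]] by (simp add: space_pair_measure)
    then show "emeasure (Kf \<mu> y) UNIV = 1" using prob_space.emeasure_space_1[OF Kf_prob[of \<mu> y]] by simp
  qed
  also have "\<dots> = 1" by simp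
  finally show "emeasure (data_dist \<mu>) (space (data_dist \<mu>)) = 1" by (simp add: space_data)
qed

lemma emeasure_Kf:
  assumes "X \<in> sets borel"
  shows "emeasure (Kf \<mu> y) (UNIV \<times> X) =
     emeasure lborel (cball (center \<mu> y) 1 \<inter> X) / emeasure lborel (cball (center \<mu> y) 1)"
proof -
  have "emeasure (Kf \<mu> y) (UNIV \<times> X) = emeasure (uniform_measure lborel (cball (center \<mu> y) 1))
          ((\<lambda>f. (y, f)) -` (UNIV \<times> X) \<inter> space (uniform_measure lborel (cball (center \<mu> y) 1)))"
    unfolding Kf_def by (rule emeasure_distr[OF meas_pair]) (use assms in auto)
  also have "\<dots> = emeasure (uniform_measure lborel (cball (center \<mu> y) 1)) X" by simp
  also have "\<dots> = emeasure lborel (cball (center \<mu> y) 1 \<inter> X) / emeasure lborel (cball (center \<mu> y) 1)"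
    using assms by (intro emeasure_uniform_measure) auto
  finally show ?thesis .
qed

lemma data_null:
  assumes "X \<in> sets borel" "\<And>y. cball (center \<mu> y) 1 \<inter> X = {}"
  shows "emeasure (data_dist \<mu>) (UNIV \<times> X) = 0"
proof -
  have "emeasure (data_dist \<mu>) (UNIV \<times> X) = (\<integral>\<^sup>+y. emeasure (Kf \<mu> y) (UNIV \<times> X) \<partial>measure_pmf (bernoulli_pmf (1/2)))"
    by (rule emeasure_data) (use assms in auto)
  also have "\<dots> = (\<integral>\<^sup>+y. 0 \<partial>measure_pmf (bernoulli_pmf (1/2)))"
    by (intro nn_integral_cong) (simp add: emeasure_Kf assms)
  finally show ?thesis by simp
qed

lemma data_pos:
  assumes "X \<in> sets borel" "0 < emeasure lborel (cball (center \<mu> y) 1 \<inter> X)"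
  shows "0 < emeasure (data_dist \<mu>) (UNIV \<times> X)"
proof -
  have "emeasure (data_dist \<mu>) (UNIV \<times> X) = (\<integral>\<^sup>+y. emeasure (Kf \<mu> y) (UNIV \<times> X) \<partial>measure_pmf (bernoulli_pmf (1/2)))"
    by (rule emeasure_data) (use assms in auto)
  also have "\<dots> = emeasure (Kf \<mu> True) (UNIV \<times> X) * inverse 2 + emeasure (Kf \<mu> False) (UNIV \<times> X) * inverse 2"
    by (subst nn_integral_bernoulli_pmf) auto
  finally have eq: "emeasure (data_dist \<mu>) (UNIV \<times> X) = \<dots>" .
  have "0 < emeasure (Kf \<mu> y) (UNIV \<times> X)"
    using assms cball_fin[of "center \<mu> y"] by (simp add: emeasure_Kf ennreal_zero_less_divide top.not_eq_extremum) 
  then have p: "0 < emeasure (Kf \<mu> y) (UNIV \<times> X) * inverse 2"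
    by (simp add: ennreal_zero_less_mult_iff ennreal_inverse_positive)
  show ?thesis
  proof (cases y)
    case True then show ?thesis unfolding eq by (intro order_less_le_trans[OF p]) simp
  next
    case False then show ?thesis unfolding eq by (intro order_less_le_trans[OF p]) simp
  qed
qed

lemma coll_sets:
  assumes "A \<in> sets D" "B \<subseteq> I" "finite B"
  shows "{\<omega>\<in>space (PiM I (\<lambda>_. D)). \<forall>i\<in>B. \<omega> i \<in> A} \<in> sets (PiM I (\<lambda>_. D))"
proof -
  have "{\<omega>\<in>space (PiM I (\<lambda>_. D)). \<forall>i\<in>B. \<omega> i \<in> A} = prod_emb I (\<lambda>_. D) B (PiE B (\<lambda>_. A))"
    unfolding prod_emb_def using assms by (auto simp: space_PiM Pi_iff PiE_iff extensional_def)
  also have "\<dots> \<in> sets (PiM I (\<lambda>_. D))"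
    using assms by (intro sets_PiM_I) auto
  finally show ?thesis .
qed

lemma coll_meas:
  assumes D: "prob_space D" and A: "A \<in> sets D" and B: "B \<subseteq> I" "finite B"
  shows "measure (PiM I (\<lambda>_. D)) {\<omega>\<in>space (PiM I (\<lambda>_. D)). \<forall>i\<in>B. \<omega> i \<in> A} = measure D A ^ card B"
proof -
  interpret D: prob_space D by fact
  interpret P: product_prob_space "\<lambda>_. D" I by unfold_locales
  have "emeasure (PiM I (\<lambda>_. D)) {\<omega>\<in>space (PiM I (\<lambda>_. D)). \<forall>i\<in>B. \<omega> i \<in> A} = (\<Prod>i\<in>B. emeasure D A)"
    using A B by (intro P.emeasure_PiM_Collect) auto
  also have "\<dots> = ennreal (measure D A ^ card B)"
    by (simp add: D.emeasure_eq_measure ennreal_power)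
  finally show ?thesis
    by (simp add: P.emeasure_eq_measure)
qed

lemma blocks_card:
  fixes k m N :: nat and S :: "nat set"
  assumes km: "k * m \<le> N" and hit: "\<And>r. r < k \<Longrightarrow> \<exists>i\<in>{r*m..<(r+1)*m}. i \<in> S"
  shows "k \<le> card {i. i < N \<and> i \<in> S}"
proof -
  obtain g where g: "\<And>r. r < k \<Longrightarrow> g r \<in> {r*m..<(r+1)*m} \<and> g r \<in> S"
    using hit by metis
  have inj: "inj_on g {..<k}"
  proof (rule inj_onI)
    fix r r' assume r: "r \<in> {..<k}" "r' \<in> {..<k}" "g r = g r'"
    show "r = r'"
    proof (rule ccontr)
      assume "r \<noteq> r'"
      then consider "r < r'" | "r' < r" by linarith
      then show False
      proof cases
        case 1
        have "(r+1)*m \<le> r'*m" using 1 by (intro mult_right_mono) auto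
        then show False using g[of r] g[of r'] r by auto
      next
        case 2
        have "(r'+1)*m \<le> r*m" using 2 by (intro mult_right_mono) auto
        then show False using g[of r] g[of r'] r by auto
      qed
    qed
  qed
  have img: "g ` {..<k} \<subseteq> {i. i < N \<and> i \<in> S}"
  proof
    fix x assume "x \<in> g ` {..<k}"
    then obtain r where r: "r < k" "x = g r" by auto
    have "(r+1)*m \<le> k*m" using r by (intro mult_right_mono) auto
    then show "x \<in> {i. i < N \<and> i \<in> S}" using g[OF r(1)] r km by auto
  qed
  have "card (g ` {..<k}) \<le> card {i. i < N \<and> i \<in> S}"
    by (rule card_mono[OF _ img]) simp
  then show ?thesis using card_image[OF inj] by simp
qed

lemma div_at_top: "0 < (k::nat) \<Longrightarrow> filterlim (\<lambda>N. N div k) at_top sequentially"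
  unfolding filterlim_at_top
proof
  fix Z :: nat assume k: "0 < k"
  show "eventually (\<lambda>N. Z \<le> N div k) sequentially"
    unfolding eventually_sequentially
  proof (intro exI allI impI)
    fix N assume "Z * k \<le> N"
    then have "(Z * k) div k \<le> N div k" by (rule div_le_mono)
    then show "Z \<le> N div k" using k by simp
  qed
qed

lemma bound_lim:
  assumes "0 \<le> q" "q < 1"
  shows "(\<lambda>N. 1 - real k * q ^ (N div k)) \<longlonglongrightarrow> 1"
proof (cases "k = 0")
  case True then show ?thesis by simp
next
  case False
  have "(\<lambda>N. q ^ (N div k)) \<longlonglongrightarrow> 0"
    by (rule filterlim_compose[OF LIMSEQ_power_zero div_at_top]) (use assms False in auto)
  then have "(\<lambda>N. 1 - real k * q ^ (N div k)) \<longlonglongrightarrow> 1 - real k * 0"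
    by (intro tendsto_intros)
  then show ?thesis by simp
qed

lemma prob_main:
  fixes D :: "'b measure" and T :: "nat \<Rightarrow> (nat \<Rightarrow> 'b) set"
  assumes D: "prob_space D" and J: "J \<in> sets D" and H: "H \<in> sets D"
    and mH: "measure D H = 1" and mJ: "measure D J > 0"
    and T: "\<And>N. T N \<in> sets (PiM {..<N} (\<lambda>_. D))"
    and sub: "\<And>N \<omega>. \<omega> \<in> space (PiM {..<N} (\<lambda>_. D)) \<Longrightarrow> (\<forall>i<N. \<omega> i \<in> H) \<Longrightarrow>
                 k \<le> card {i. i < N \<and> \<omega> i \<in> J} \<Longrightarrow> \<omega> \<in> T N"
  shows "(\<lambda>N. measure (PiM {..<N} (\<lambda>_. D)) (T N)) \<longlonglongrightarrow> 1"
proof -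
  interpret D: prob_space D by fact
  define p where "p = measure D J"
  have p1: "p \<le> 1" unfolding p_def by simp
  have lower: "1 - real k * (1 - p) ^ (N div k) \<le> measure (PiM {..<N} (\<lambda>_. D)) (T N)" for N
  proof -
    let ?P = "PiM {..<N} (\<lambda>_. D)"
    interpret P: prob_space ?P by (rule prob_space_PiM) (use D in auto)
    define m where "m = N div k"
    have km: "k * m \<le> N" unfolding m_def by (simp add: mult.commute)
    define Blk where "Blk r = {r*m..<(r+1)*m}" for r
    have Blk_sub: "Blk r \<subseteq> {..<N}" if "r < k" for r
    proof -
      have "(r+1)*m \<le> k*m" using that by (intro mult_right_mono) auto
      then show ?thesis using km unfolding Blk_def by auto
    qed
    define AH where "AH = {\<omega>\<in>space ?P. \<forall>i\<in>{..<N}. \<omega> i \<in> H}"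
    define E where "E r = {\<omega>\<in>space ?P. \<forall>i\<in>Blk r. \<omega> i \<in> space D - J}" for r
    have AH_sets: "AH \<in> P.events" unfolding AH_def by (rule coll_sets[OF H]) auto
    have E_sets: "E r \<in> P.events" if "r < k" for r
      unfolding E_def by (rule coll_sets) (use J Blk_sub[OF that] in \<open>auto simp: Blk_def\<close>)
    have mAH: "P.prob AH = 1" unfolding AH_def by (subst coll_meas[OF D H]) (auto simp: mH)
    have mE: "P.prob (E r) = (1 - p) ^ m" if "r < k" for r
    proof -
      have "P.prob (E r) = measure D (space D - J) ^ card (Blk r)"
        unfolding E_def by (rule coll_meas[OF D]) (use J Blk_sub[OF that] in \<open>auto simp: Blk_def\<close>)
      also have "measure D (space D - J) = 1 - p" unfolding p_def using J by (simp add: D.prob_compl)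
      finally show ?thesis by (simp add: Blk_def)
    qed
    define U where "U = (\<Union>r<k. E r)"
    have U_sets: "U \<in> P.events" unfolding U_def using E_sets by auto
    have mU: "P.prob U \<le> real k * (1 - p) ^ m"
    proof -
      have "P.prob U \<le> (\<Sum>r<k. P.prob (E r))" unfolding U_def
        by (rule P.finite_measure_subadditive_finite) (use E_sets in auto)
      also have "\<dots> = real k * (1 - p) ^ m" using mE by simp
      finally show ?thesis .
    qed
    have GT: "AH - U \<subseteq> T N"
    proof
      fix \<omega> assume w: "\<omega> \<in> AH - U"
      have sp: "\<omega> \<in> space ?P" using w unfolding AH_def by auto
      have allH: "\<forall>i<N. \<omega> i \<in> H" using w unfolding AH_def by auto
      have "k \<le> card {i. i < N \<and> i \<in> {i. \<omega> i \<in> J}}"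
      proof (rule blocks_card[OF km])
        fix r assume r: "r < k"
        have "\<omega> \<notin> E r" using w r unfolding U_def by auto
        then obtain i where i: "i \<in> Blk r" "\<omega> i \<notin> space D - J" using sp unfolding E_def by auto
        have "\<omega> i \<in> space D" using sp i Blk_sub[OF r] by (auto simp: space_PiM PiE_iff)
        then show "\<exists>i\<in>{r*m..<(r+1)*m}. i \<in> {i. \<omega> i \<in> J}" using i unfolding Blk_def by auto
      qed
      then show "\<omega> \<in> T N" using sub[OF sp allH] by simp
    qed
    have e1: "P.prob (AH - U) = P.prob AH - P.prob (AH \<inter> U)"
      by (rule P.finite_measure_Diff'[OF AH_sets U_sets])
    have e2: "P.prob (AH \<inter> U) \<le> P.prob U" by (rule P.finite_measure_mono) (use U_sets in auto)
    have "1 - real k * (1 - p) ^ m \<le> P.prob (AH - U)" using mAH mU e1 e2 by linarith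
    also have "P.prob (AH - U) \<le> P.prob (T N)" by (rule P.finite_measure_mono[OF GT T])
    finally show ?thesis unfolding m_def .
  qed
  have upper: "measure (PiM {..<N} (\<lambda>_. D)) (T N) \<le> 1" for N
  proof -
    interpret P: prob_space "PiM {..<N} (\<lambda>_. D)" by (rule prob_space_PiM) (use D in auto)
    show ?thesis by simp
  qed
  show ?thesis
  proof (rule tendsto_sandwich[OF _ _ bound_lim[of "1 - p" k] tendsto_const])
    show "eventually (\<lambda>N. 1 - real k * (1 - p) ^ (N div k) \<le> measure (PiM {..<N} (\<lambda>_. D)) (T N)) sequentially"
      using lower by simp
    show "eventually (\<lambda>N. measure (PiM {..<N} (\<lambda>_. D)) (T N) \<le> 1) sequentially"
      using upper by simp
  qed (use mJ p1 in \<open>auto simp: p_def\<close>)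
qed

lemma snd_meas: "snd \<in> measurable (data_dist \<mu>) (borel :: 'a::euclidean_space measure)"
  using measurable_snd[of "count_space (UNIV::bool set)" "borel :: 'a measure"]
  by (subst measurable_cong_sets[OF sets_data refl])

lemma comp_meas: "j < N \<Longrightarrow> (\<lambda>\<omega>. snd (\<omega> j)) \<in> measurable (PiM {..<N} (\<lambda>_. data_dist (\<mu>::'a::euclidean_space))) borel"
  by (rule measurable_compose[OF measurable_component_singleton[of j "{..<N}" "\<lambda>_. data_dist \<mu>"] snd_meas]) simp

lemma logit_meas[measurable]: "logit w b \<in> borel_measurable (borel :: 'a::euclidean_space measure)"
  unfolding logit_def by measurable

lemma entropy_meas[measurable]: "entropy t w b \<in> borel_measurable (borel :: 'a::euclidean_space measure)"
  unfolding entropy_hh[abs_def] hh_def by measurable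

lemma plt: "f \<in> borel_measurable M \<Longrightarrow> g \<in> borel_measurable M \<Longrightarrow> Measurable.pred M (\<lambda>x. (f x::real) < g x)"
  by (simp add: Measurable.pred_def borel_measurable_less)
lemma ple: "f \<in> borel_measurable M \<Longrightarrow> g \<in> borel_measurable M \<Longrightarrow> Measurable.pred M (\<lambda>x. (f x::real) \<le> g x)"
  by (simp add: Measurable.pred_def borel_measurable_le)
lemma peq: "f \<in> borel_measurable M \<Longrightarrow> g \<in> borel_measurable M \<Longrightarrow> Measurable.pred M (\<lambda>x. (f x::real) = g x)"
  by (simp add: Measurable.pred_def borel_measurable_eq)
lemma pconst: "Measurable.pred M (\<lambda>x. K)"
  by (simp add: Measurable.pred_def)

lemma ent_comp: "j < N \<Longrightarrow> (\<lambda>\<omega>. entropy t w b (snd (\<omega> j))) \<in> borel_measurable (PiM {..<N} (\<lambda>_. data_dist (\<mu>::'a::euclidean_space)))"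
  by (rule measurable_compose[OF comp_meas entropy_meas])
lemma logit_comp: "j < N \<Longrightarrow> (\<lambda>\<omega>. logit w b (snd (\<omega> j))) \<in> borel_measurable (PiM {..<N} (\<lambda>_. data_dist (\<mu>::'a::euclidean_space)))"
  by (rule measurable_compose[OF comp_meas logit_meas])
lemma norm_comp: "j < N \<Longrightarrow> (\<lambda>\<omega>. norm (snd (\<omega> j) - m)) \<in> borel_measurable (PiM {..<N} (\<lambda>_. data_dist (\<mu>::'a::euclidean_space)))"
  by (rule measurable_compose[OF comp_meas, where g="\<lambda>f. norm (f - m)"]) auto

lemma pred_yhat: "j < N \<Longrightarrow> Measurable.pred (PiM {..<N} (\<lambda>_. data_dist (\<mu>::'a::euclidean_space))) (\<lambda>\<omega>. yhat w b (snd (\<omega> j)) = y)"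
  unfolding yhat_def
  by (rule pred_intros_logic(6)[OF plt[OF measurable_const logit_comp] pconst]) auto

lemma pred_atom:
  fixes \<mu> w :: "'a::euclidean_space"
  assumes "i < N"
  shows "Measurable.pred (PiM {..<N} (\<lambda>_. data_dist \<mu>)) (\<lambda>\<omega>. j < N \<and> yhat w b (snd (\<omega> j)) = y \<and>
     (entropy t w b (snd (\<omega> j)) < entropy t w b (snd (\<omega> i)) \<or>
      (entropy t w b (snd (\<omega> j)) = entropy t w b (snd (\<omega> i)) \<and> j < i)))"
proof (rule pred_intros_conj1')
  assume j: "j < N"
  show "Measurable.pred (PiM {..<N} (\<lambda>_. data_dist \<mu>)) (\<lambda>\<omega>. yhat w b (snd (\<omega> j)) = y \<and>
     (entropy t w b (snd (\<omega> j)) < entropy t w b (snd (\<omega> i)) \<or>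
      (entropy t w b (snd (\<omega> j)) = entropy t w b (snd (\<omega> i)) \<and> j < i)))"
    apply (rule pred_intros_logic(3)[OF pred_yhat[OF j]])
    apply (rule pred_intros_logic(5)[OF plt[OF ent_comp[OF j] ent_comp[OF assms]]])
    apply (rule pred_intros_conj2')
    apply (rule peq[OF ent_comp[OF j] ent_comp[OF assms]])
    done
qed

lemma pred_nat_lt: "f \<in> measurable M (count_space UNIV) \<Longrightarrow> Measurable.pred M (\<lambda>x. (f x::nat) < k)"
proof -
  assume f: "f \<in> measurable M (count_space UNIV)"
  have "{x\<in>space M. f x < k} = f -` {..<k} \<inter> space M" by auto
  then show ?thesis unfolding Measurable.pred_def using measurable_sets[OF f, of "{..<k}"] by simp
qed

lemma pred_nat_eq: "f \<in> measurable M (count_space UNIV) \<Longrightarrow> Measurable.pred M (\<lambda>x. (f x::nat) = k)"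
proof -
  assume f: "f \<in> measurable M (count_space UNIV)"
  have "{x\<in>space M. f x = k} = f -` {k} \<inter> space M" by auto
  then show ?thesis unfolding Measurable.pred_def using measurable_sets[OF f, of "{k}"] by simp
qed

lemma pred_mem:
  fixes \<mu> w :: "'a::euclidean_space"
  shows "Measurable.pred (PiM {..<N} (\<lambda>_. data_dist \<mu>)) (\<lambda>\<omega>. i \<in> memory t w b k N y (\<lambda>i. snd (\<omega> i)))"
proof (cases "i < N")
  case True
  have c: "(\<lambda>\<omega>. card {j. j < N \<and> yhat w b (snd (\<omega> j)) = y \<and>
     (entropy t w b (snd (\<omega> j)) < entropy t w b (snd (\<omega> i)) \<or>
      (entropy t w b (snd (\<omega> j)) = entropy t w b (snd (\<omega> i)) \<and> j < i))}) \<in>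
     measurable (PiM {..<N} (\<lambda>_. data_dist \<mu>)) (count_space UNIV)"
  proof (rule measurable_card)
    fix j
    show "{x \<in> space (PiM {..<N} (\<lambda>_. data_dist \<mu>)). j \<in> {j. j < N \<and> yhat w b (snd (x j)) = y \<and>
     (entropy t w b (snd (x j)) < entropy t w b (snd (x i)) \<or>
      (entropy t w b (snd (x j)) = entropy t w b (snd (x i)) \<and> j < i))}} \<in> sets (PiM {..<N} (\<lambda>_. data_dist \<mu>))"
      unfolding mem_Collect_eq by (rule pred_atom[OF True, unfolded Measurable.pred_def])
  qed
  show ?thesis unfolding memory_def mem_Collect_eq
    apply (rule pred_intros_conj1')
    apply (rule pred_intros_logic(3)[OF pred_yhat[OF True]])
    apply (rule pred_nat_lt[OF c])
    done
next
  case False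
  then have e: "{\<omega> \<in> space (PiM {..<N} (\<lambda>_. data_dist \<mu>)). i \<in> memory t w b k N y (\<lambda>i. snd (\<omega> i))} = {}"
    by (auto simp: memory_def)
  show ?thesis unfolding Measurable.pred_def e by (rule sets.empty_sets)
qed

lemma target_sets:
  fixes \<mu> w :: "'a::euclidean_space"
  shows "{\<omega> \<in> space (PiM {..<N} (\<lambda>_. data_dist \<mu>)).
               card (memory t w b k N y (\<lambda>i. snd (\<omega> i))) = k \<and>
               (\<forall>i \<in> memory t w b k N y (\<lambda>i. snd (\<omega> i)).
                  norm (snd (\<omega> i) - m) \<le> \<rho>)} \<in> sets (PiM {..<N} (\<lambda>_. data_dist \<mu>))"
proof -
  let ?M = "PiM {..<N} (\<lambda>_. data_dist \<mu>)"
  have c: "(\<lambda>\<omega>. card (memory t w b k N y (\<lambda>i. snd (\<omega> i)))) \<in> measurable ?M (count_space UNIV)"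
  proof (rule measurable_card)
    fix i
    show "{x \<in> space ?M. i \<in> memory t w b k N y (\<lambda>i. snd (x i))} \<in> sets ?M"
      by (rule pred_mem[unfolded Measurable.pred_def])
  qed
  have p1: "Measurable.pred ?M (\<lambda>\<omega>. card (memory t w b k N y (\<lambda>i. snd (\<omega> i))) = k)"
    by (rule pred_nat_eq[OF c])
  have eq: "(\<forall>i \<in> memory t w b k N y (\<lambda>i. snd (\<omega> i)). norm (snd (\<omega> i) - m) \<le> \<rho>) \<longleftrightarrow>
        (\<forall>i\<in>{..<N}. i \<in> memory t w b k N y (\<lambda>i. snd (\<omega> i)) \<longrightarrow> norm (snd (\<omega> i) - m) \<le> \<rho>)" for \<omega>
    by (auto simp: memory_def)
  have p2: "Measurable.pred ?M (\<lambda>\<omega>. \<forall>i\<in>{..<N}. i \<in> memory t w b k N y (\<lambda>i. snd (\<omega> i)) \<longrightarrow> norm (snd (\<omega> i) - m) \<le> \<rho>)"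
    apply (rule pred_intros_finite(3))
    apply simp
    apply (rule pred_intros_logic(4)[OF pred_mem])
    apply (rule ple[OF norm_comp measurable_const])
    apply auto
    done
  have "Measurable.pred ?M (\<lambda>\<omega>. card (memory t w b k N y (\<lambda>i. snd (\<omega> i))) = k \<and>
               (\<forall>i \<in> memory t w b k N y (\<lambda>i. snd (\<omega> i)). norm (snd (\<omega> i) - m) \<le> \<rho>))"
    unfolding eq by (rule pred_intros_logic(3)[OF p1 p2])
  then show ?thesis by (simp add: Measurable.pred_def)
qed

theorem lemma5:
  fixes \<mu> w :: "'a::euclidean_space" and b t \<rho> :: real and k :: nat and y :: bool
  assumes "norm w = 1" and "t > 0"
    and "\<mu> \<bullet> w > 0" and "- (\<mu> \<bullet> w) - 1 < b" and "b < \<mu> \<bullet> w + 1"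
    and "\<rho> > 0"
  shows "(\<lambda>N. measure (PiM {..<N} (\<lambda>_. data_dist \<mu>))
            {\<omega> \<in> space (PiM {..<N} (\<lambda>_. data_dist \<mu>)).
               card (memory t w b k N y (\<lambda>i. snd (\<omega> i))) = k \<and>
               (\<forall>i \<in> memory t w b k N y (\<lambda>i. snd (\<omega> i)).
                  norm (snd (\<omega> i) - mstar \<mu> w y) \<le> \<rho>)})
         \<longlonglongrightarrow> 1"
proof -
  note nw = assms(1) and tpos = assms(2) and aw = assms(3) and b1 = assms(4) and b2 = assms(5) and rp = assms(6)
  define v where "v = (if y then w else - w)"
  define c where "c = center \<mu> y"
  define m where "m = mstar \<mu> w y"
  define a where "a = \<mu> \<bullet> w"
  define Z where "Z = a + 1 + (if y then b else - b)"
  have nv: "norm v = 1" using nw by (simp add: v_def)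
  have cv: "c \<bullet> v = a" by (simp add: c_def v_def center_def a_def)
  have mcv: "m = c + v" by (simp add: m_def c_def v_def mstar_def center_def)
  have cneg: "center \<mu> (\<not> y) = - c" by (simp add: c_def center_def)
  have Zpos: "Z > 0" using b1 b2 by (simp add: Z_def a_def)
  have apos: "a > 0" using aw by (simp add: a_def)
  define \<delta> where "\<delta> = min (\<rho>\<^sup>2 / 2) (min (2 * a) (Z / 2))"
  have d0: "\<delta> > 0" using rp apos Zpos by (simp add: \<delta>_def)
  have d1: "2 * \<delta> \<le> \<rho>\<^sup>2" by (simp add: \<delta>_def)
  have d2: "\<delta> \<le> 2 * (c \<bullet> v)" by (simp add: \<delta>_def cv)
  have d3: "\<delta> < Z" using Zpos by (simp add: \<delta>_def)
  define J where "J = {f::'a. a + 1 - \<delta> < f \<bullet> v}"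
  define H where "H = {f::'a. f \<in> J \<longrightarrow> norm (f - m) \<le> \<rho>}"
  have J_b: "J \<in> sets borel" unfolding J_def by measurable
  have H_b: "H \<in> sets borel" unfolding H_def J_def by measurable
  have J_s: "UNIV \<times> J \<in> sets (data_dist \<mu>)" unfolding sets_data by (intro pair_measureI J_b) auto
  have H_s: "UNIV \<times> H \<in> sets (data_dist \<mu>)" unfolding sets_data by (intro pair_measureI H_b) auto
  interpret D: prob_space "data_dist \<mu>" by (rule prob_data)
  have nH_b: "- H \<in> sets borel" using H_b by auto
  have null: "emeasure (data_dist \<mu>) (UNIV \<times> - H) = 0"
  proof (rule data_null[OF nH_b])
    fix y'
    show "cball (center \<mu> y') 1 \<inter> - H = {}"
    proof (cases "y' = y")
      case True
      show ?thesis
      proof (rule ccontr)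
        assume "cball (center \<mu> y') 1 \<inter> - H \<noteq> {}"
        then obtain f where f0: "f \<in> cball (center \<mu> y') 1" "f \<in> - H" by blast
        have f: "dist c f \<le> 1" "f \<in> J" "\<not> norm (f - m) \<le> \<rho>"
          using f0 True unfolding c_def H_def by auto
        have "norm (f - (c + v)) \<le> \<rho>" using geo1[OF nv f(1) _ d1 rp] f(2) by (simp add: J_def cv)
        then show False using f(3) mcv by simp
      qed
    next
      case False
      then have cy: "center \<mu> y' = - c" using cneg by (cases y; cases y') auto
      show ?thesis
      proof (rule ccontr)
        assume "cball (center \<mu> y') 1 \<inter> - H \<noteq> {}"
        then obtain f where f0: "f \<in> cball (center \<mu> y') 1" "f \<in> - H" by blast
        have f: "dist (- c) f \<le> 1" "f \<in> J"
          using f0 cy unfolding H_def by auto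
        have "f \<bullet> v \<le> c \<bullet> v + 1 - \<delta>" by (rule geo2[OF nv f(1) d2])
        then show False using f(2) by (simp add: J_def cv)
      qed
    qed
  qed
  have mH: "measure (data_dist \<mu>) (UNIV \<times> H) = 1"
  proof -
    have "space (data_dist \<mu>) - UNIV \<times> H = UNIV \<times> - H" by (auto simp: space_data)
    moreover have "measure (data_dist \<mu>) (UNIV \<times> - H) = 0" using null by (simp add: D.emeasure_eq_measure)
    ultimately show ?thesis using D.prob_compl[OF H_s] by simp
  qed
  define s where "s = min 1 (\<delta> / 2)"
  have s0: "0 < s" "s \<le> 1" "3 * s \<le> 2 * \<delta>" using d0 by (auto simp: s_def)
  have ballsub0: "ball (c + (1 - s) *\<^sub>R v) (s/2) \<subseteq> cball c 1 \<inter> J"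
    using geo3[OF nv s0, of c] unfolding J_def cv .
  have ballsub: "ball (c + (1 - s) *\<^sub>R v) (s/2) \<subseteq> cball (center \<mu> y) 1 \<inter> J"
    using ballsub0 unfolding c_def .
  have "0 < emeasure lborel (ball (c + (1 - s) *\<^sub>R v) (s/2))"
  proof -
    have "0 < measure lborel (ball (c + (1 - s) *\<^sub>R v) (s/2))" by (rule content_ball_pos) (use s0 in simp)
    then show ?thesis by (auto simp: measure_def zero_less_iff_neq_zero)
  qed
  also have "\<dots> \<le> emeasure lborel (cball (center \<mu> y) 1 \<inter> J)"
    by (intro emeasure_mono ballsub) (use J_b in auto)
  finally have "0 < emeasure (data_dist \<mu>) (UNIV \<times> J)" by (rule data_pos[OF J_b])
  then have mJ: "measure (data_dist \<mu>) (UNIV \<times> J) > 0"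
    by (simp add: D.emeasure_eq_measure)
  have hJ: "yhat w b f = y \<and> (yhat w b g = y \<and> g \<notin> J \<longrightarrow> \<bar>logit w b g\<bar> < \<bar>logit w b f\<bar>)"
    if f: "f \<in> J" for f g
  proof (cases y)
    case True
    have fw: "f \<bullet> w > a + 1 - \<delta>" using f True by (simp add: J_def v_def)
    have lf: "logit w b f > Z - \<delta>" using fw True by (simp add: logit_def Z_def)
    show ?thesis
    proof
      show "yhat w b f = y" using lf d3 True by (simp add: yhat_def)
      show "yhat w b g = y \<and> g \<notin> J \<longrightarrow> \<bar>logit w b g\<bar> < \<bar>logit w b f\<bar>"
      proof
        assume g: "yhat w b g = y \<and> g \<notin> J"
        have "g \<bullet> w \<le> a + 1 - \<delta>" using g True by (simp add: J_def v_def)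
        then have "logit w b g \<le> Z - \<delta>" using True by (simp add: logit_def Z_def)
        moreover have "logit w b g > 0" using g True by (simp add: yhat_def)
        ultimately show "\<bar>logit w b g\<bar> < \<bar>logit w b f\<bar>" using lf d3 by simp
      qed
    qed
  next
    case False
    have fw: "- (f \<bullet> w) > a + 1 - \<delta>" using f False by (simp add: J_def v_def)
    have lf: "logit w b f < - (Z - \<delta>)" using fw False by (simp add: logit_def Z_def)
    show ?thesis
    proof
      show "yhat w b f = y" using lf d3 False by (simp add: yhat_def)
      show "yhat w b g = y \<and> g \<notin> J \<longrightarrow> \<bar>logit w b g\<bar> < \<bar>logit w b f\<bar>"
      proof
        assume g: "yhat w b g = y \<and> g \<notin> J"
        have "- (g \<bullet> w) \<le> a + 1 - \<delta>" using g False by (simp add: J_def v_def)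
        then have "logit w b g \<ge> - (Z - \<delta>)" using False by (simp add: logit_def Z_def)
        moreover have "logit w b g \<le> 0" using g False by (simp add: yhat_def)
        ultimately show "\<bar>logit w b g\<bar> < \<bar>logit w b f\<bar>" using lf d3 by simp
      qed
    qed
  qed
  show ?thesis
  proof (rule prob_main[OF prob_data J_s H_s mH mJ])
    fix N :: nat
    show "{\<omega> \<in> space (PiM {..<N} (\<lambda>_. data_dist \<mu>)).
               card (memory t w b k N y (\<lambda>i. snd (\<omega> i))) = k \<and>
               (\<forall>i \<in> memory t w b k N y (\<lambda>i. snd (\<omega> i)).
                  norm (snd (\<omega> i) - mstar \<mu> w y) \<le> \<rho>)} \<in> sets (PiM {..<N} (\<lambda>_. data_dist \<mu>))"
      by (rule target_sets)
  next
    fix N :: nat and \<omega> :: "nat \<Rightarrow> bool \<times> 'a"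
    assume sp: "\<omega> \<in> space (PiM {..<N} (\<lambda>_. data_dist \<mu>))"
      and allH: "\<forall>i<N. \<omega> i \<in> UNIV \<times> H" and cJ: "k \<le> card {i. i < N \<and> \<omega> i \<in> UNIV \<times> J}"
    have cJ': "k \<le> card {i. i < N \<and> snd (\<omega> i) \<in> J}"
    proof -
      have "{i. i < N \<and> \<omega> i \<in> UNIV \<times> J} = {i. i < N \<and> snd (\<omega> i) \<in> J}" by (auto simp: mem_Times_iff)
      then show ?thesis using cJ by simp
    qed
    have nJ: "norm (snd (\<omega> i) - m) \<le> \<rho>" if "i < N" "snd (\<omega> i) \<in> J" for i
      using allH that by (auto simp: H_def mem_Times_iff)
    from memory_good[where fs="\<lambda>i::nat. snd (\<omega> i)", OF tpos hJ cJ' nJ]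
    show "\<omega> \<in> {\<omega> \<in> space (PiM {..<N} (\<lambda>_. data_dist \<mu>)).
               card (memory t w b k N y (\<lambda>i. snd (\<omega> i))) = k \<and>
               (\<forall>i \<in> memory t w b k N y (\<lambda>i. snd (\<omega> i)).
                  norm (snd (\<omega> i) - mstar \<mu> w y) \<le> \<rho>)}"
      using sp by (simp add: m_def)
  qed
qed

end
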